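(* The function $G$ extends to a meromorphic function on $\mathbb C$. Its poles are exactly the points $t=2ki-\frac{i}{2}$ for $k\in\mathbb N=\{1,2,\dots\}$ and $t=-2\pi n^2$ for $n\in\mathbb N$, and all of them are simple.
   Context: $G$ is defined by the series $G(t)=\sum_{n=1}^\infty n^{-\frac12-it}\,\frac{t}{2\pi n^2+t}$, which converges absolutely and defines a meromorphic function on $\{t\in\mathbb C:\Im t<\frac32\}$. *)

theory Defs
  imports "HOL-Complex_Analysis.Complex_Analysis"
begin

text \<open>The series G(t) = sum over n >= 1 of n powr (-1/2 - i t) * t / (2 pi n^2 + t).
  It converges absolutely on Im t < 3/2 away from the points t = -2 pi n^2.\<close>
definition G :: "complex \<Rightarrow> complex" where
  "G t = (\<Sum>m. let n = of_nat (Suc m) :: complex in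
            n powr (- (1/2) - \<i> * t) * (t / (2 * of_real pi * n ^ 2 + t)))"

end

theory Submission
  imports Defs
begin


lemma holo_series:
  assumes S: "open S" and hol: "\<And>n. f n holomorphic_on S"
    and bnd: "\<And>x. x \<in> S \<Longrightarrow> \<exists>d h. 0 < d \<and> summable h \<and> (\<forall>n. \<forall>y\<in>ball x d \<inter> S. norm (f n y) \<le> h n)"
  shows "(\<lambda>x. \<Sum>n. f n x) holomorphic_on S"
proof -
  have hfd: "\<And>n x. x \<in> S \<Longrightarrow> (f n has_field_derivative deriv (f n) x) (at x)"
    using hol S holomorphic_derivI by blast
  have to_g: "\<And>x. x \<in> S \<Longrightarrow> \<exists>d h. 0 < d \<and> summable h \<and> (\<forall>\<^sub>F n in sequentially. \<forall>y\<in>ball x d \<inter> S. norm (f n y) \<le> h n)"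
  proof -
    fix x assume "x \<in> S"
    from bnd[OF this] obtain d h where "0 < d" "summable h" "\<forall>n. \<forall>y\<in>ball x d \<inter> S. norm (f n y) \<le> h n" by blast
    then show "\<exists>d h. 0 < d \<and> summable h \<and> (\<forall>\<^sub>F n in sequentially. \<forall>y\<in>ball x d \<inter> S. norm (f n y) \<le> h n)"
      by (intro exI[of _ d] exI[of _ h]) (auto intro: always_eventually)
  qed
  obtain g g' where gg: "\<forall>x \<in> S. ((\<lambda>n. f n x) sums g x) \<and> ((\<lambda>n. deriv (f n) x) sums g' x) \<and> (g has_field_derivative g' x) (at x)"
    using series_and_derivative_comparison_local[OF S hfd to_g] by blast
  have "g holomorphic_on S" using gg S holomorphic_on_open by blast
  moreover have "\<And>x. x \<in> S \<Longrightarrow> (\<Sum>n. f n x) = g x" using gg sums_unique by metis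
  ultimately show ?thesis using holomorphic_cong by metis
qed

lemma norm_nat_powr: "norm (of_nat n powr z :: complex) = real n powr Re z"
  by (simp add: norm_powr_real_powr)

lemma summable_shift_powr:
  assumes "c < -1"
  shows "summable (\<lambda>m. real (m + k) powr c)"
  using summable_iff_shift[of "\<lambda>n. real n powr c" k] summable_real_powr_iff[of c] assms by simp

definition DD :: "complex \<Rightarrow> complex" where
  "DD w = (\<Sum>m. of_nat (m+2) powr (-w))"

lemma summable_DD: "Re w > 1 \<Longrightarrow> summable (\<lambda>m. of_nat (m+2) powr (-w) :: complex)"
  apply (rule summable_norm_cancel)
  apply (simp only: norm_nat_powr)
  using summable_shift_powr[of "Re (-w)" 2] by simp

lemma holo_DD: "DD holomorphic_on {w. Re w > 1}"
  unfolding DD_def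
proof (rule holo_series)
  show "open {w. Re w > 1}" by (rule open_halfspace_Re_gt)
  show "(\<lambda>w. of_nat (n+2) powr (-w) :: complex) holomorphic_on {w. 1 < Re w}" for n
    by (intro holomorphic_intros)
  fix x :: complex assume "x \<in> {w. 1 < Re w}"
  then have x: "Re x > 1" by simp
  define d where "d = (Re x - 1) / 2"
  have d: "d > 0" using x by (simp add: d_def)
  have "summable (\<lambda>m. real (m + 2) powr (- (Re x - d)))"
    by (rule summable_shift_powr) (use x in \<open>auto simp: d_def field_simps\<close>)
  moreover have "\<forall>n. \<forall>y\<in>ball x d \<inter> {w. 1 < Re w}. norm (of_nat (n+2) powr (-y) :: complex) \<le> real (n + 2) powr (- (Re x - d))"
  proof (intro allI ballI)
    fix n y assume y: "y \<in> ball x d \<inter> {w. 1 < Re w}"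
    have "\<bar>Re x - Re y\<bar> \<le> norm (x - y)" using abs_Re_le_cmod[of "x-y"] by simp
    also have "\<dots> < d" using y by (simp add: dist_norm)
    finally have "Re y > Re x - d" by linarith
    then show "norm (of_nat (n+2) powr (-y) :: complex) \<le> real (n + 2) powr (- (Re x - d))"
      by (simp only: norm_nat_powr) (intro powr_mono, auto)
  qed
  ultimately show "\<exists>d h. 0 < d \<and> summable h \<and> (\<forall>n. \<forall>y\<in>ball x d \<inter> {w. 1 < Re w}. norm (of_nat (n+2) powr (-y) :: complex) \<le> h n)"
    using d by blast
qed

lemma norm_pochhammer_le:
  fixes z :: complex
  assumes "norm z \<le> A" "A > 0"
  shows "norm (pochhammer z j) \<le> pochhammer A j"
proof (induction j)
  case 0 then show ?case by simp
next
  case (Suc j)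
  have "norm (pochhammer z (Suc j)) = norm (pochhammer z j) * norm (z + of_nat j)"
    by (simp add: pochhammer_Suc norm_mult)
  also have "\<dots> \<le> pochhammer A j * (A + of_nat j)"
  proof (rule mult_mono)
    show "norm (z + of_nat j) \<le> A + of_nat j"
      using norm_triangle_ineq[of z "of_nat j"] assms by simp
  qed (use Suc assms in \<open>auto intro: pochhammer_nonneg\<close>)
  also have "\<dots> = pochhammer A (Suc j)" by (simp add: pochhammer_Suc)
  finally show ?case .
qed

definition PP :: "real \<Rightarrow> nat \<Rightarrow> real" where
  "PP A j = pochhammer A j / fact j"

lemma PP_nonneg: "A > 0 \<Longrightarrow> PP A j \<ge> 0"
  unfolding PP_def by (intro divide_nonneg_pos pochhammer_nonneg) auto

lemma norm_gchoose_le: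
  fixes a :: complex
  assumes "norm a \<le> A" "A > 0"
  shows "norm (a gchoose j) \<le> PP A j"
proof -
  have "norm (a gchoose j) = norm (pochhammer (-a) j) / fact j"
    by (simp add: gbinomial_pochhammer norm_mult norm_divide norm_power)
  also have "\<dots> \<le> pochhammer A j / fact j"
    by (intro divide_right_mono norm_pochhammer_le) (use assms in auto)
  finally show ?thesis by (simp add: PP_def)
qed

lemma summable_PP: "A > 0 \<Longrightarrow> summable (\<lambda>j. PP A j * (1/2)^j)"
proof -
  have "(\<lambda>j. ((-A) gchoose j) * (-1/2)^j) sums (1 + (-1/2)) powr (-A)"
    by (rule gen_binomial_real) simp
  moreover have "((-A) gchoose j) * (-1/2)^j = PP A j * (1/2)^j" for j
  proof -
    have "((-A) gchoose j) * (-1/2)^j = ((-1)^j * (-1)^j) * (pochhammer A j / fact j) * (1/2)^j"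
      by (simp add: gbinomial_pochhammer power_mult_distrib[symmetric] field_simps)
    also have "(-1::real)^j * (-1)^j = 1" by (simp add: power_mult_distrib[symmetric])
    finally show ?thesis by (simp add: PP_def)
  qed
  ultimately show ?thesis by (simp add: sums_summable)
qed

definition CC :: "real \<Rightarrow> nat \<Rightarrow> real" where
  "CC A K = (\<Sum>i. PP A (i + Suc K) * (1/2)^i)"

lemma summable_CC: "A > 0 \<Longrightarrow> summable (\<lambda>i. PP A (i + Suc K) * (1/2)^i)"
proof -
  assume A: "A > 0"
  have "summable (\<lambda>i. PP A (i + Suc K) * (1/2)^(i + Suc K))"
    using summable_iff_shift[of "\<lambda>j. PP A j * (1/2)^j" "Suc K"] summable_PP[OF A] by simp
  then have 1: "summable (\<lambda>i. 2^(Suc K) * (PP A (i + Suc K) * (1/2)^(i + Suc K)))"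
    by (rule summable_mult)
  have eq: "PP A (i + Suc K) * (1/2)^i = 2^(Suc K) * (PP A (i + Suc K) * (1/2)^(i + Suc K))" for i :: nat
    by (simp add: power_add power_one_over)
  show ?thesis by (simp only: eq 1)
qed

lemma holo_gchoose [holomorphic_intros]:
  "f holomorphic_on S \<Longrightarrow> (\<lambda>w. (f w :: complex) gchoose j) holomorphic_on S"
  unfolding gbinomial_pochhammer by (intro holomorphic_intros) auto

definition tterm :: "nat \<Rightarrow> complex \<Rightarrow> nat \<Rightarrow> complex" where
  "tterm K w m = of_nat (m+3) powr (1-w)
     - (\<Sum>j\<le>K. ((1-w) gchoose j) * of_nat (m+2) powr ((1-w) - of_nat j))"

definition TT :: "nat \<Rightarrow> complex \<Rightarrow> complex" where
  "TT K w = (\<Sum>m. tterm K w m)"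

lemma binom_nat_sums:
  "(\<lambda>j. (a gchoose j) * of_nat (m+2) powr (a - of_nat j)) sums (of_nat (m+3) powr a :: complex)"
proof -
  have "(\<lambda>j. (a gchoose j) * of_real (real (m+2)) powr (a - of_nat j) * of_real 1 ^ j) sums
          of_real (real (m+2) + 1) powr a"
    by (rule gen_binomial_complex'') simp
  then show ?thesis by (simp add: add_ac)
qed

lemma tterm_sums:
  "(\<lambda>i. ((1-w) gchoose (i + Suc K)) * of_nat (m+2) powr ((1-w) - of_nat (i + Suc K))) sums tterm K w m"
  using sums_split_initial_segment[OF binom_nat_sums[of "1-w" m], of "Suc K"]
  by (simp add: tterm_def lessThan_Suc_atMost)

lemma tterm_bound:
  assumes A: "norm (1 - w) \<le> A" "A > 0" and sig: "Re w \<ge> \<sigma>"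
  shows "norm (tterm K w m) \<le> real (m+2) powr (-\<sigma> - real K) * CC A K"
proof -
  define n where "n = real (m+2)"
  have n2: "n \<ge> 2" by (simp add: n_def)
  have b: "norm (((1-w) gchoose (i + Suc K)) * of_nat (m+2) powr ((1-w) - of_nat (i + Suc K)))
          \<le> n powr (-\<sigma> - real K) * (PP A (i + Suc K) * (1/2)^i)" for i
  proof -
    have "norm (((1-w) gchoose (i + Suc K)) * of_nat (m+2) powr ((1-w) - of_nat (i + Suc K)))
        = norm ((1-w) gchoose (i + Suc K)) * n powr (- Re w - real K - real i)"
      by (simp only: norm_mult norm_nat_powr) (simp add: n_def algebra_simps)
    also have "n powr (- Re w - real K - real i) = n powr (- Re w - real K) * (1 / n ^ i)"
      using n2 by (simp add: powr_diff powr_realpow)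
    also have "norm ((1-w) gchoose (i + Suc K)) * (n powr (- Re w - real K) * (1 / n ^ i))
             \<le> PP A (i + Suc K) * (n powr (-\<sigma> - real K) * (1/2)^i)"
    proof (intro mult_mono norm_gchoose_le A)
      show "n powr (- Re w - real K) \<le> n powr (- \<sigma> - real K)"
        using sig n2 by (intro powr_mono) auto
      show "1 / n ^ i \<le> (1 / 2) ^ i"
        using n2 by (simp add: power_one_over divide_simps power_mono)
    qed (use A n2 in \<open>auto intro: PP_nonneg\<close>)
    finally show ?thesis by (simp add: mult_ac)
  qed
  have "norm (tterm K w m) \<le> (\<Sum>i. n powr (-\<sigma> - real K) * (PP A (i + Suc K) * (1/2)^i))"
    apply (subst sums_unique[OF tterm_sums])
    by (rule norm_suminf_le[OF b]) (intro summable_mult summable_CC A)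
  also have "\<dots> = n powr (-\<sigma> - real K) * CC A K"
    unfolding CC_def by (rule suminf_mult) (intro summable_CC A)
  finally show ?thesis by (simp add: n_def)
qed

lemma holo_tterm: "(\<lambda>w. tterm K w m) holomorphic_on S"
  unfolding tterm_def by (intro holomorphic_intros)

lemma holo_TT: "TT K holomorphic_on {w. Re w > 1 - real K}"
proof -
  have "(\<lambda>w. \<Sum>m. tterm K w m) holomorphic_on {w. Re w > 1 - real K}"
  proof (rule holo_series)
    show "open {w. Re w > 1 - real K}" by (rule open_halfspace_Re_gt)
    show "(\<lambda>w. tterm K w m) holomorphic_on {w. Re w > 1 - real K}" for m by (rule holo_tterm)
    fix x :: complex assume "x \<in> {w. Re w > 1 - real K}"
    then have x: "Re x > 1 - real K" by simp
    define d where "d = (Re x - (1 - real K)) / 2"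
    define A where "A = norm (1 - x) + d"
    define \<sigma> where "\<sigma> = Re x - d"
    have d: "d > 0" using x by (simp add: d_def)
    have A: "A > 0" using d by (simp add: A_def add_nonneg_pos)
    have "summable (\<lambda>m. real (m + 2) powr (-\<sigma> - real K))"
      by (rule summable_shift_powr) (use x in \<open>auto simp: \<sigma>_def d_def field_simps\<close>)
    then have "summable (\<lambda>m. real (m + 2) powr (-\<sigma> - real K) * CC A K)"
      by (rule summable_mult2)
    moreover have "\<forall>m. \<forall>y\<in>ball x d \<inter> {w. Re w > 1 - real K}. norm (tterm K y m) \<le> real (m + 2) powr (-\<sigma> - real K) * CC A K"
    proof (intro allI ballI)
      fix m y assume y: "y \<in> ball x d \<inter> {w. Re w > 1 - real K}"
      have dxy: "norm (x - y) < d" using y by (simp add: dist_norm)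
      have "\<bar>Re x - Re y\<bar> \<le> norm (x - y)" using abs_Re_le_cmod[of "x-y"] by simp
      then have "Re y \<ge> \<sigma>" using dxy by (simp add: \<sigma>_def)
      moreover have "norm (1 - y) \<le> A"
        using norm_triangle_ineq[of "1 - x" "x - y"] dxy by (simp add: A_def)
      ultimately show "norm (tterm K y m) \<le> real (m + 2) powr (-\<sigma> - real K) * CC A K"
        using tterm_bound A by blast
    qed
    ultimately show "\<exists>d h. 0 < d \<and> summable h \<and> (\<forall>m. \<forall>y\<in>ball x d \<inter> {w. Re w > 1 - real K}. norm (tterm K y m) \<le> h m)"
      using d by blast
  qed
  then show ?thesis by (simp add: TT_def[abs_def])
qed

definition E0 :: "complex \<Rightarrow> complex" where
  "E0 w = (w - 1) * DD w"

lemma holo_E0: "E0 holomorphic_on {w. Re w > 1}"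
proof -
  have "(\<lambda>w. (w - 1) * DD w) holomorphic_on {w. Re w > 1}"
    by (intro holomorphic_intros holo_DD)
  then show ?thesis by (simp add: E0_def[abs_def])
qed

lemma DD_sums: "Re v > 1 \<Longrightarrow> (\<lambda>m. of_nat (m+2) powr (-v) :: complex) sums DD v"
  unfolding DD_def by (rule summable_sums[OF summable_DD])

lemma telescope_powr:
  assumes "Re w > 1"
  shows "(\<lambda>m. of_nat (m+3) powr (1-w) - of_nat (m+2) powr (1-w) :: complex) sums (- (2 powr (1-w)))"
proof -
  define f where "f m = (of_nat (m+2) powr (1-w) :: complex)" for m
  have fl: "filterlim (\<lambda>m. real (m + 2)) at_top sequentially"
    by (rule filterlim_at_top_mono[OF filterlim_real_sequentially]) auto
  have "(\<lambda>m. real (m + 2) powr (1 - Re w)) \<longlonglongrightarrow> 0"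
    using tendsto_neg_powr[of "1 - Re w", OF _ fl] assms by simp
  then have "(\<lambda>m. norm (f m)) \<longlonglongrightarrow> 0"
    by (simp only: f_def norm_nat_powr) simp
  then have "f \<longlonglongrightarrow> 0" by (simp only: tendsto_norm_zero_iff)
  from telescope_sums[OF this] have "(\<lambda>m. f (Suc m) - f m) sums (0 - f 0)" .
  moreover have "f (Suc m) = of_nat (m+3) powr (1-w)" for m by (simp add: f_def add_ac)
  moreover have "f 0 = 2 powr (1-w)" by (simp add: f_def)
  ultimately show ?thesis by (simp add: f_def)
qed

lemma gchoose_step:
  fixes a :: complex
  shows "(a gchoose Suc (Suc i)) = (a - of_nat (Suc i)) * (a gchoose Suc i) / (of_nat (Suc i) + 1)"
proof -
  have "a * (a gchoose Suc i) = of_nat (Suc i) * (a gchoose Suc i) + of_nat (Suc (Suc i)) * (a gchoose Suc (Suc i))"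
    by (rule gbinomial_mult_1)
  then have "of_nat (Suc (Suc i)) * (a gchoose Suc (Suc i)) = (a - of_nat (Suc i)) * (a gchoose Suc i)"
    by (simp add: algebra_simps)
  moreover have "(of_nat (Suc (Suc i)) :: complex) = of_nat (Suc i) + 1" by simp
  ultimately show ?thesis
    by (metis (no_types, lifting) nonzero_mult_div_cancel_left of_nat_eq_0_iff nat.distinct(1))
qed

lemma base_id:
  assumes w: "Re w > 1"
  shows "E0 w = 2 powr (1-w) + TT (Suc K) w
           - (\<Sum>i<K. ((1-w) gchoose Suc i) / (of_nat (Suc i) + 1) * E0 (w + of_nat (Suc i)))"
proof -
  define a where "a = 1 - w"
  have tsplit: "tterm (Suc K) w m = (of_nat (m+3) powr (1-w) - of_nat (m+2) powr (1-w))
      - (\<Sum>j\<le>K. (a gchoose Suc j) * of_nat (m+2) powr (-(w + of_nat j)))" for m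
  proof -
    have "(\<Sum>j\<le>Suc K. ((1-w) gchoose j) * of_nat (m+2) powr ((1-w) - of_nat j))
        = of_nat (m+2) powr (1-w) + (\<Sum>j\<le>K. ((1-w) gchoose Suc j) * of_nat (m+2) powr ((1-w) - of_nat (Suc j)))"
      by (subst sum.atMost_Suc_shift) simp
    also have "(\<lambda>j. ((1-w) gchoose Suc j) * of_nat (m+2) powr ((1-w) - of_nat (Suc j)))
        = (\<lambda>j. (a gchoose Suc j) * of_nat (m+2) powr (-(w + of_nat j)))"
      by (rule ext) (simp add: a_def algebra_simps)
    finally show ?thesis by (simp add: tterm_def)
  qed
  have s1: "(\<lambda>m. \<Sum>j\<le>K. (a gchoose Suc j) * of_nat (m+2) powr (-(w + of_nat j)))
           sums (\<Sum>j\<le>K. (a gchoose Suc j) * DD (w + of_nat j))"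
    by (intro sums_sum sums_mult DD_sums) (use w in simp)
  have "(\<lambda>m. tterm (Suc K) w m) sums (- (2 powr (1-w)) - (\<Sum>j\<le>K. (a gchoose Suc j) * DD (w + of_nat j)))"
    unfolding tsplit by (intro sums_diff telescope_powr s1 w)
  then have TT: "TT (Suc K) w = - (2 powr (1-w)) - (\<Sum>j\<le>K. (a gchoose Suc j) * DD (w + of_nat j))"
    by (simp add: TT_def sums_iff)
  have "(\<Sum>j\<le>K. (a gchoose Suc j) * DD (w + of_nat j))
      = a * DD w + (\<Sum>i<K. (a gchoose Suc (Suc i)) * DD (w + of_nat (Suc i)))"
    apply (subst lessThan_Suc_atMost[symmetric])
    apply (subst sum.lessThan_Suc_shift)
    by simp
  also have "a * DD w = - E0 w" by (simp add: a_def E0_def algebra_simps)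
  also have "(\<lambda>i. (a gchoose Suc (Suc i)) * DD (w + of_nat (Suc i)))
           = (\<lambda>i. - ((a gchoose Suc i) / (of_nat (Suc i) + 1) * E0 (w + of_nat (Suc i))))"
  proof (rule ext)
    fix i
    show "(a gchoose Suc (Suc i)) * DD (w + of_nat (Suc i)) = - ((a gchoose Suc i) / (of_nat (Suc i) + 1) * E0 (w + of_nat (Suc i)))"
    proof -
      have "(of_nat (Suc i) + 1 :: complex) = of_nat (Suc (Suc i))" by simp
      then have nz: "(of_nat (Suc i) + 1 :: complex) \<noteq> 0" by (metis of_nat_eq_0_iff nat.distinct(1))
      show ?thesis
        by (subst gchoose_step) (simp add: E0_def a_def divide_inverse algebra_simps)
    qed
  qed
  finally show ?thesis
    by (simp add: TT a_def sum_negf)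
qed

fun EE :: "nat \<Rightarrow> complex \<Rightarrow> complex" where
  "EE 0 w = E0 w"
| "EE (Suc K) w = 2 powr (1-w) + TT (Suc K) w
     - (\<Sum>i<K. ((1-w) gchoose Suc i) / (of_nat (Suc i) + 1) * EE K (w + of_nat (Suc i)))"

lemma EE_E0: "Re w > 1 \<Longrightarrow> EE K w = E0 w"
proof (induction K arbitrary: w)
  case 0 then show ?case by simp
next
  case (Suc K)
  have "EE K (w + of_nat (Suc i)) = E0 (w + of_nat (Suc i))" for i
    by (rule Suc.IH) (use Suc.prems in simp)
  then show ?case using base_id[OF Suc.prems, of K] by simp
qed

lemma holo_EE: "EE K holomorphic_on {w. Re w > 1 - real K}"
proof (induction K)
  case 0 then show ?case using holo_E0 by (simp add: fun_eq_iff)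
next
  case (Suc K)
  define U where "U = {w. Re w > 1 - real (Suc K)}"
  have t: "\<And>i. (\<lambda>w. EE K (w + of_nat (Suc i))) holomorphic_on U"
  proof -
    fix i
    have "(EE K \<circ> (\<lambda>w. w + of_nat (Suc i))) holomorphic_on U"
    proof (rule holomorphic_on_compose)
      show "(\<lambda>w. w + of_nat (Suc i)) holomorphic_on U" by (intro holomorphic_intros)
      show "EE K holomorphic_on (\<lambda>w. w + of_nat (Suc i)) ` U"
        by (rule holomorphic_on_subset[OF Suc.IH]) (auto simp: U_def)
    qed
    then show "(\<lambda>w. EE K (w + of_nat (Suc i))) holomorphic_on U" by (simp add: o_def)
  qed
  have "(\<lambda>w. 2 powr (1-w) + TT (Suc K) w
     - (\<Sum>i<K. ((1-w) gchoose Suc i) / (of_nat (Suc i) + 1) * EE K (w + of_nat (Suc i)))) holomorphic_on U"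
    by (intro holomorphic_intros t) (use holo_TT[of "Suc K"] in \<open>simp_all add: U_def\<close>)
  then show ?case by (simp add: U_def)
qed

lemma EE_Suc_eq:
  assumes "Re w > 1 - real K"
  shows "EE (Suc K) w = EE K w"
proof (rule analytic_continuation_open[where s = "{w. Re w > 1}" and s' = "{w. Re w > 1 - real K}" and f = "EE (Suc K)" and g = "EE K" and z = w])
  show "open {w. Re w > (1::real)}" by (rule open_halfspace_Re_gt)
  show "open {w. Re w > 1 - real K}" by (rule open_halfspace_Re_gt)
  show "{w. Re w > (1::real)} \<noteq> {}" by (auto intro: exI[of _ 2])
  show "connected {w. Re w > 1 - real K}" by (intro convex_connected convex_halfspace_Re_gt)
  show "{w. Re w > 1} \<subseteq> {w. Re w > 1 - real K}" by auto
  show "EE (Suc K) holomorphic_on {w. Re w > 1 - real K}"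
    by (rule holomorphic_on_subset[OF holo_EE]) auto
  show "EE K holomorphic_on {w. Re w > 1 - real K}" by (rule holo_EE)
  show "\<And>z. z \<in> {w. Re w > 1} \<Longrightarrow> EE (Suc K) z = EE K z" by (metis EE_E0 mem_Collect_eq)
qed (use assms in simp)

lemma EE_mono_eq:
  assumes "Re w > 1 - real K" "K \<le> K'"
  shows "EE K' w = EE K w"
  using assms(2)
proof (induction K' rule: dec_induct)
  case base then show ?case by simp
next
  case (step n)
  have "EE (Suc n) w = EE n w" by (rule EE_Suc_eq) (use assms step in simp)
  then show ?case using step by simp
qed

definition EF :: "complex \<Rightarrow> complex" where
  "EF w = EE (nat \<lceil>1 - Re w\<rceil> + 1) w"

lemma EF_eq:
  assumes "Re w > 1 - real K"
  shows "EF w = EE K w"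
proof -
  define K0 where "K0 = nat \<lceil>1 - Re w\<rceil> + 1"
  have K0: "Re w > 1 - real K0" unfolding K0_def by linarith
  have "EF w = EE K0 w" by (simp add: EF_def K0_def)
  also have "\<dots> = EE (max K K0) w" by (rule EE_mono_eq[symmetric]) (use K0 in auto)
  also have "\<dots> = EE K w" by (rule EE_mono_eq) (use assms in auto)
  finally show ?thesis .
qed

lemma holo_EF: "EF holomorphic_on UNIV"
proof -
  have "\<exists>f'. (EF has_field_derivative f') (at z)" for z
  proof -
    define K where "K = nat \<lceil>1 - Re z\<rceil> + 1"
    define U where "U = {w. Re w > 1 - real K}"
    have U: "open U" "z \<in> U" unfolding U_def K_def by (auto intro: open_halfspace_Re_gt) linarith
    have "EF holomorphic_on U"
      using holo_EE[of K] EF_eq by (subst holomorphic_cong[OF refl]) (auto simp: U_def)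
    then show ?thesis using U holomorphic_on_open by blast
  qed
  then show ?thesis using holomorphic_on_open[of UNIV] by auto
qed

lemma EF_1: "EF 1 = 1"
proof -
  have "EF 1 = EE 1 1" by (rule EF_eq) simp
  also have "tterm 1 1 m = 0" for m
  proof -
    have a: "(of_nat m + 3 :: complex) \<noteq> 0"
    proof
      assume "(of_nat m + 3 :: complex) = 0"
      then have "Re (of_nat m + 3 :: complex) = 0" by simp
      then show False by simp
    qed
    have b: "(2 + of_nat m :: complex) \<noteq> 0"
    proof
      assume "(2 + of_nat m :: complex) = 0"
      then have "Re (2 + of_nat m :: complex) = 0" by simp
      then show False by simp
    qed
    show ?thesis using a b by (simp add: tterm_def)
  qed
  then have "TT 1 1 = 0" by (simp add: TT_def)
  then have "EE 1 1 = 1" by simp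
  finally show ?thesis .
qed

definition Zf :: "complex \<Rightarrow> complex" where
  "Zf w = 1 + EF w / (w - 1)"

lemma Zf_sums:
  assumes "Re w > 1"
  shows "(\<lambda>m. of_nat (Suc m) powr (-w)) sums Zf w"
proof -
  have "(\<lambda>m. of_nat (Suc (Suc m)) powr (-w)) sums DD w"
    using DD_sums[OF assms] by (simp add: add_ac)
  then have "(\<lambda>m. of_nat (Suc m) powr (-w)) sums (DD w + of_nat (Suc 0) powr (-w))"
    using sums_Suc_iff[where f="\<lambda>m. of_nat (Suc m) powr (-w) :: complex" and s="DD w"] by simp
  moreover have "w \<noteq> 1" using assms by auto
  then have "Zf w = DD w + 1"
    using EF_eq[where w=w and K=0] assms by (simp add: Zf_def E0_def)
  ultimately show ?thesis by simp
qed

definition rep :: "(complex \<Rightarrow> complex) \<Rightarrow> complex \<Rightarrow> (complex \<Rightarrow> complex) \<Rightarrow> (complex \<Rightarrow> complex) \<Rightarrow> bool" where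
  "rep f z A B \<longleftrightarrow> A analytic_on {z} \<and> B analytic_on {z} \<and>
      eventually (\<lambda>t. f t = A t + B t / (t - z)) (at z)"

lemma rep_analytic: "f analytic_on {z} \<Longrightarrow> rep f z f (\<lambda>_. 0)"
  unfolding rep_def by auto

lemma rep_cong: "rep f z A B \<Longrightarrow> eventually (\<lambda>t. g t = f t) (at z) \<Longrightarrow> rep g z A B"
  unfolding rep_def by (auto elim: eventually_elim2)

lemma rep_add: "rep f z A B \<Longrightarrow> rep g z A' B' \<Longrightarrow>
    rep (\<lambda>t. f t + g t) z (\<lambda>t. A t + A' t) (\<lambda>t. B t + B' t)"
  unfolding rep_def
  by (auto intro!: analytic_intros elim: eventually_elim2 simp: add_divide_distrib)

lemma rep_mult: "h analytic_on {z} \<Longrightarrow> rep f z A B \<Longrightarrow>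
    rep (\<lambda>t. h t * f t) z (\<lambda>t. h t * A t) (\<lambda>t. h t * B t)"
  unfolding rep_def
  by (auto intro!: analytic_intros elim: eventually_mono simp: distrib_left)

lemma rep_sum: "finite I \<Longrightarrow> (\<And>i. i \<in> I \<Longrightarrow> rep (f i) z (A i) (B i)) \<Longrightarrow>
    rep (\<lambda>t. \<Sum>i\<in>I. f i t) z (\<lambda>t. \<Sum>i\<in>I. A i t) (\<lambda>t. \<Sum>i\<in>I. B i t)"
proof (induction I rule: finite_induct)
  case empty then show ?case by (simp add: rep_def)
next
  case (insert x F)
  have "rep (\<lambda>t. f x t + (\<Sum>i\<in>F. f i t)) z (\<lambda>t. A x t + (\<Sum>i\<in>F. A i t)) (\<lambda>t. B x t + (\<Sum>i\<in>F. B i t))"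
    using insert by (intro rep_add) auto
  then show ?case using insert by simp
qed

lemma rep_mero:
  assumes "rep f z A B"
  shows "f meromorphic_on {z}"
proof -
  have "(\<lambda>t. (A t * (t - z) + B t) / (t - z)) meromorphic_on {z}"
    using assms unfolding rep_def
    by (intro meromorphic_intros analytic_on_imp_meromorphic_on analytic_intros) auto
  moreover have "eventually (\<lambda>t. f t = (A t * (t - z) + B t) / (t - z)) (at z)"
  proof -
    have "eventually (\<lambda>t. t \<noteq> z) (at z)" by (rule eventually_neq_at_within)
    moreover have "eventually (\<lambda>t. f t = A t + B t / (t - z)) (at z)" using assms by (simp add: rep_def)
    ultimately show ?thesis by eventually_elim (simp add: field_simps)
  qed
  ultimately show ?thesis
    by (subst meromorphic_on_cong[where g = "\<lambda>t. (A t * (t - z) + B t) / (t - z)"]) auto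
qed

lemma rep_pole:
  assumes "rep f z A B" "B z \<noteq> 0"
  shows "is_pole f z \<and> zorder f z = -1"
proof -
  define g where "g t = A t * (t - z) + B t" for t
  from assms(1) have "A analytic_on {z}" "B analytic_on {z}" and ev: "eventually (\<lambda>t. f t = A t + B t / (t - z)) (at z)"
    by (auto simp: rep_def)
  then obtain e1 e2 where e: "e1 > 0" "A holomorphic_on ball z e1" "e2 > 0" "B holomorphic_on ball z e2"
    by (auto simp: analytic_at_ball)
  from ev obtain d where d: "d > 0" "\<And>t. t \<noteq> z \<Longrightarrow> dist t z < d \<Longrightarrow> f t = A t + B t / (t - z)"
    by (auto simp: eventually_at)
  define r where "r = min d (min e1 e2)"
  have r: "r > 0" using d e by (simp add: r_def)
  have gh: "g holomorphic_on ball z r"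
    unfolding g_def r_def using e by (auto intro!: holomorphic_intros elim: holomorphic_on_subset)
  have gz: "g z \<noteq> 0" using assms by (simp add: g_def)
  have feq: "f t = g t / (t - z)" if "t \<in> ball z r" "t \<noteq> z" for t
    using d(2)[of t] that by (auto simp: g_def r_def dist_commute field_simps)
  have "is_pole (\<lambda>t. g t / (t - z) ^ 1) z"
    by (rule is_pole_basic[OF gh]) (use r gz in auto)
  moreover have "eventually (\<lambda>t. g t / (t - z) ^ 1 = f t) (at z)"
    unfolding eventually_at using r feq by (auto simp: dist_commute intro!: exI[of _ r])
  ultimately have "is_pole f z" by (rule is_pole_transform) simp
  moreover have "zorder f z = -1"
    by (rule zorder_eqI[OF _ _ gh gz]) (use r feq in \<open>auto simp: power_int_minus divide_inverse\<close>)
  ultimately show ?thesis by simp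
qed

lemma rep_nopole:
  assumes "rep f z A B" "B z = 0"
  shows "\<not> is_pole f z"
proof
  assume pole: "is_pole f z"
  from assms(1) have "A analytic_on {z}" "B analytic_on {z}" and ev: "eventually (\<lambda>t. f t = A t + B t / (t - z)) (at z)"
    by (auto simp: rep_def)
  have "(B has_field_derivative deriv B z) (at z)"
    using \<open>B analytic_on {z}\<close> analytic_on_imp_differentiable_at field_differentiable_derivI by blast
  then have "((\<lambda>t. (B t - B z) / (t - z)) \<longlongrightarrow> deriv B z) (at z)"
    by (simp add: has_field_derivative_iff)
  moreover have "(A \<longlongrightarrow> A z) (at z)"
    using \<open>A analytic_on {z}\<close> analytic_at_imp_isCont isCont_def by blast
  ultimately have "((\<lambda>t. A t + (B t - B z) / (t - z)) \<longlongrightarrow> A z + deriv B z) (at z)"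
    by (intro tendsto_add)
  then have "(f \<longlongrightarrow> A z + deriv B z) (at z)"
    by (rule Lim_transform_eventually) (use ev assms(2) in \<open>auto elim: eventually_mono\<close>)
  then show False
    using pole unfolding is_pole_def by (intro not_tendsto_and_filterlim_at_infinity) auto
qed

definition rterm :: "nat \<Rightarrow> complex \<Rightarrow> nat \<Rightarrow> complex" where
  "rterm J t m = of_nat (Suc m) powr (- (1/2) - \<i> * t - 2 * of_nat J)
       * (t / (2 * of_real pi * (of_nat (Suc m))^2 + t))"

definition RR :: "nat \<Rightarrow> complex \<Rightarrow> complex" where
  "RR J t = (\<Sum>m. rterm J t m)"

lemma denom_bound:
  fixes t :: complex
  assumes "pi * real (Suc m)^2 \<ge> norm t"
  shows "norm (2 * of_real pi * (of_nat (Suc m))^2 + t) \<ge> pi * real (Suc m)^2"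
proof -
  have "norm (2 * of_real pi * (of_nat (Suc m))^2 :: complex) = 2 * pi * real (Suc m)^2"
    by (simp only: norm_mult norm_power norm_of_nat norm_of_real) simp
  then have "2 * pi * real (Suc m)^2 - norm t \<le> norm (2 * of_real pi * (of_nat (Suc m))^2 + t)"
    using norm_diff_ineq[of "2 * of_real pi * (of_nat (Suc m))^2 :: complex" t] by simp
  then show ?thesis using assms by linarith
qed

lemma rterm_bound:
  fixes t :: complex
  assumes "pi * real (Suc m)^2 \<ge> norm t"
  shows "norm (rterm J t m) \<le> norm t / pi * real (Suc m) powr (Im t - 2 * real J - 5/2)"
proof -
  define n where "n = real (Suc m)"
  have n1: "n \<ge> 1" by (simp add: n_def)
  have npos: "pi * n^2 > 0" using n1 by simp
  have D: "norm (2 * of_real pi * (of_nat (Suc m))^2 + t) \<ge> pi * n^2"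
    using denom_bound[OF assms] by (simp add: n_def)
  have "norm (rterm J t m) = n powr (Im t - 2 * real J - 1/2) * (norm t / norm (2 * of_real pi * (of_nat (Suc m))^2 + t))"
    unfolding rterm_def by (simp only: norm_mult norm_nat_powr norm_divide) (simp add: n_def algebra_simps)
  also have "\<dots> \<le> n powr (Im t - 2 * real J - 1/2) * (norm t / (pi * n^2))"
  proof -
    have Dpos: "norm (2 * of_real pi * (of_nat (Suc m))^2 + t) > 0" using D npos by linarith
    show ?thesis by (intro mult_left_mono divide_left_mono D) (use npos Dpos in \<open>auto intro: mult_pos_pos\<close>)
  qed
  also have "\<dots> = norm t / pi * (n powr (Im t - 2 * real J - 1/2) / n^2)" by simp
  also have "n powr (Im t - 2 * real J - 1/2) / n^2 = n powr (Im t - 2 * real J - 5/2)"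
  proof -
    have "n powr (Im t - 2 * real J - 5/2) = n powr (Im t - 2 * real J - 1/2) / n powr 2"
      by (subst powr_diff[symmetric]) simp
    also have "n powr 2 = n^2" using n1 by (simp add: powr_realpow')
    finally show ?thesis by simp
  qed
  finally show ?thesis by (simp add: n_def)
qed

lemma summable_rterm:
  assumes "Im t < 2 * real J + 3/2"
  shows "summable (rterm J t)"
proof (rule summable_comparison_test')
  show "summable (\<lambda>m. norm t / pi * real (m + 1) powr (Im t - 2 * real J - 5/2))"
    by (intro summable_mult summable_shift_powr) (use assms in simp)
  fix m assume "nat \<lceil>norm t\<rceil> \<le> m"
  then have "norm t \<le> real m" by linarith
  also have "\<dots> \<le> pi * real (Suc m)^2"
  proof -
    have "m \<le> (Suc m)^2" by (simp add: power2_eq_square)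
    then have "real m \<le> real (Suc m)^2" by (metis of_nat_le_iff of_nat_power)
    moreover have "real (Suc m)^2 \<le> pi * real (Suc m)^2" using pi_gt3 by (simp add: mult_le_cancel_right1)
    ultimately show ?thesis by linarith
  qed
  finally show "norm (rterm J t m) \<le> norm t / pi * real (m + 1) powr (Im t - 2 * real J - 5/2)"
    using rterm_bound by simp
qed

lemma analytic_powr_right: "(\<lambda>t. c powr f t) analytic_on S" if "f analytic_on S" for c :: complex
proof -
  have "(\<lambda>w. c powr w) holomorphic_on UNIV" by (intro holomorphic_intros)
  then have "(\<lambda>w. c powr w) analytic_on UNIV" by (simp add: analytic_on_open)
  then have "((\<lambda>w. c powr w) \<circ> f) analytic_on S"
    by (intro analytic_on_compose[OF that]) (auto elim: analytic_on_subset)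
  then show ?thesis by (simp add: o_def)
qed

lemma nat_sq_eq_complex:
  assumes "(- 2 * of_real pi * of_nat a ^ 2 :: complex) = - 2 * of_real pi * of_nat b ^ 2"
  shows "a = b"
proof -
  have "(of_nat a ^ 2 :: complex) = of_nat b ^ 2" using assms pi_gt_zero by simp
  then have "(of_nat (a^2) :: complex) = of_nat (b^2)" by simp
  then have "a^2 = b^2" by (simp only: of_nat_eq_iff)
  then show ?thesis by (rule power_eq_imp_eq_base) auto
qed

lemma powr_nat_nz: "(of_nat (Suc m) :: complex) powr z \<noteq> 0"
proof -
  have "(of_nat (Suc m) :: complex) \<noteq> 0" by (rule of_nat_neq_0)
  then show ?thesis by (simp only: powr_def if_not_P) simp
qed

lemma R_rep:
  assumes t0: "Im t0 < 2 * real J + 3/2"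
  shows "\<exists>A B. rep (RR J) t0 A B \<and> (B t0 \<noteq> 0 \<longleftrightarrow> (\<exists>n::nat. n \<ge> 1 \<and> t0 = - 2 * of_real pi * of_nat n ^ 2))"
proof -
  define \<delta> where "\<delta> = min 1 ((2 * real J + 3/2 - Im t0) / 2)"
  define M where "M = norm t0 + 1"
  define c where "c = Im t0 + \<delta>"
  define N where "N = nat \<lceil>M\<rceil>"
  define S where "S = ball t0 \<delta>"
  have \<delta>: "\<delta> > 0" using t0 by (simp add: \<delta>_def)
  have c: "c < 2 * real J + 3/2" using t0 by (auto simp: c_def \<delta>_def min_def field_simps)
  have M1: "M \<ge> 1" by (simp add: M_def)
  have inS: "norm t \<le> M \<and> Im t \<le> c" if "t \<in> S" for t
  proof -
    have d: "norm (t - t0) < \<delta>" using that by (simp add: S_def dist_norm norm_minus_commute)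
    have "norm t \<le> norm t0 + norm (t - t0)" using norm_triangle_ineq[of t0 "t - t0"] by simp
    moreover have "Im t \<le> Im t0 + norm (t - t0)" using abs_Im_le_cmod[of "t - t0"] by simp
    moreover have "\<delta> \<le> 1" by (simp add: \<delta>_def)
    ultimately show ?thesis using d by (simp add: M_def c_def)
  qed
  have big: "pi * real (Suc (m + N))^2 \<ge> M" for m
  proof -
    have "M \<le> real N" unfolding N_def by linarith
    also have "\<dots> \<le> real (Suc (m + N))" by simp
    also have "\<dots> \<le> real (Suc (m + N))^2" by (simp add: power2_eq_square)
    also have "\<dots> \<le> pi * real (Suc (m + N))^2" using pi_gt3 by (simp add: mult_le_cancel_right1)
    finally show ?thesis .
  qed
  define h where "h m = M / pi * real (m + (N+1)) powr (c - 2 * real J - 5/2)" for m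
  have hsum: "summable h" unfolding h_def
    by (intro summable_mult summable_shift_powr) (use c in simp)
  have tb: "norm (rterm J t (m + N)) \<le> h m" if "t \<in> S" for t m
  proof -
    have tS: "norm t \<le> M" "Im t \<le> c" using inS[OF that] by auto
    have "norm (rterm J t (m + N)) \<le> norm t / pi * real (Suc (m + N)) powr (Im t - 2 * real J - 5/2)"
      by (rule rterm_bound) (use big[of m] tS in linarith)
    also have "\<dots> \<le> M / pi * real (Suc (m + N)) powr (c - 2 * real J - 5/2)"
      by (intro mult_mono divide_right_mono powr_mono) (use tS M1 in auto)
    finally show ?thesis by (simp add: h_def add_ac)
  qed
  have Dnz: "2 * of_real pi * (of_nat (Suc (m + N)))^2 + t \<noteq> 0" if "t \<in> S" for t m
  proof -
    have "norm (2 * of_real pi * (of_nat (Suc (m + N)))^2 + t) \<ge> pi * real (Suc (m + N))^2"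
      by (rule denom_bound) (use big[of m] inS[OF that] in linarith)
    moreover have "pi * real (Suc (m + N))^2 > 0" by (intro mult_pos_pos) (simp_all del: of_nat_Suc)
    ultimately have "norm (2 * of_real pi * (of_nat (Suc (m + N)))^2 + t) > 0" by linarith
    then show ?thesis using zero_less_norm_iff by blast
  qed
  define T where "T t = (\<Sum>m. rterm J t (m + N))" for t
  have holT: "T holomorphic_on S"
  proof -
    have "(\<lambda>t. \<Sum>m. rterm J t (m + N)) holomorphic_on S"
    proof (rule holo_series)
      show "open S" by (simp add: S_def)
      show "(\<lambda>t. rterm J t (m + N)) holomorphic_on S" for m
        unfolding rterm_def by (intro holomorphic_intros) (use Dnz in auto)
      show "\<exists>d h. 0 < d \<and> summable h \<and> (\<forall>n. \<forall>y\<in>ball x d \<inter> S. norm (rterm J y (n + N)) \<le> h n)" for x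
        using hsum tb by (intro exI[of _ 1] exI[of _ h]) auto
    qed
    then show ?thesis by (simp add: T_def[abs_def])
  qed
  have split: "RR J t = T t + (\<Sum>m<N. rterm J t m)" if "t \<in> S" for t
  proof -
    have "summable (\<lambda>m. rterm J t (m + N))"
      by (rule summable_comparison_test'[OF hsum]) (use tb that in auto)
    then have "summable (rterm J t)" by (simp add: summable_iff_shift)
    then show ?thesis unfolding RR_def T_def by (rule suminf_split_initial_segment)
  qed
  define cond where "cond m \<longleftrightarrow> t0 = - 2 * of_real pi * of_nat (Suc m) ^ 2" for m
  define X where "X m t = of_nat (Suc m) powr (- (1/2) - \<i> * t - 2 * of_nat J)" for m t
  define Ah where "Ah t = (\<Sum>m<N. if cond m then 0 else rterm J t m)" for t
  define Bh where "Bh t = (\<Sum>m<N. if cond m then X m t * t else 0)" for t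
  have headeq: "(\<Sum>m<N. rterm J t m) = Ah t + Bh t / (t - t0)" if "t \<noteq> t0" for t
  proof -
    have "rterm J t m = (if cond m then 0 else rterm J t m) + (if cond m then X m t * t else 0) / (t - t0)" for m
    proof (cases "cond m")
      case True
      then have "2 * of_real pi * (of_nat (Suc m))^2 + t = t - t0" by (simp add: cond_def)
      then show ?thesis using True by (simp add: rterm_def X_def)
    qed simp
    then have "(\<Sum>m<N. rterm J t m) = (\<Sum>m<N. (if cond m then 0 else rterm J t m) + (if cond m then X m t * t else 0) / (t - t0))"
      by simp
    also have "\<dots> = Ah t + Bh t / (t - t0)"
      by (simp add: Ah_def Bh_def sum.distrib sum_divide_distrib)
    finally show ?thesis .
  qed
  have "rep (RR J) t0 (\<lambda>t. Ah t + T t) Bh"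
    unfolding rep_def
  proof (intro conjI)
    have "Ah analytic_on {t0}"
      unfolding Ah_def
    proof (intro analytic_on_sum ballI)
      fix m assume "m \<in> {..<N}"
      show "(\<lambda>t. if cond m then 0 else rterm J t m) analytic_on {t0}"
      proof (cases "cond m")
        case False
        then have "2 * of_real pi * (of_nat (Suc m))^2 + t0 \<noteq> 0" unfolding cond_def
          by (metis add.commute add_eq_0_iff mult_minus_left)
        then have "(\<lambda>t. rterm J t m) analytic_on {t0}"
          unfolding rterm_def by (intro analytic_intros analytic_powr_right) auto
        then show ?thesis using False by simp
      qed simp
    qed
    moreover have "T analytic_on {t0}"
      using holT \<delta> by (auto simp: analytic_at S_def intro!: exI[of _ S])
    ultimately show "(\<lambda>t. Ah t + T t) analytic_on {t0}" by (intro analytic_intros)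
    show "Bh analytic_on {t0}"
      unfolding Bh_def X_def
    proof (intro analytic_on_sum ballI)
      fix m assume "m \<in> {..<N}"
      have "(\<lambda>t. of_nat (Suc m) powr (- (1/2) - \<i> * t - 2 * of_nat J) * t) analytic_on {t0}"
        by (intro analytic_intros analytic_powr_right)
      then show "(\<lambda>t. if cond m then of_nat (Suc m) powr (- (1/2) - \<i> * t - 2 * of_nat J) * t else 0) analytic_on {t0}"
        by (cases "cond m") auto
    qed
    show "eventually (\<lambda>t. RR J t = Ah t + T t + Bh t / (t - t0)) (at t0)"
      unfolding eventually_at
      by (rule exI[of _ \<delta>]) (use \<delta> split headeq in \<open>auto simp: S_def dist_commute\<close>)
  qed
  moreover have "Bh t0 \<noteq> 0 \<longleftrightarrow> (\<exists>n::nat. n \<ge> 1 \<and> t0 = - 2 * of_real pi * of_nat n ^ 2)"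
  proof
    assume "Bh t0 \<noteq> 0"
    then obtain m where "cond m" unfolding Bh_def by (metis (mono_tags, lifting) sum.neutral)
    then show "\<exists>n::nat. n \<ge> 1 \<and> t0 = - 2 * of_real pi * of_nat n ^ 2"
      by (intro exI[of _ "Suc m"]) (simp add: cond_def)
  next
    assume "\<exists>n::nat. n \<ge> 1 \<and> t0 = - 2 * of_real pi * of_nat n ^ 2"
    then obtain n where n: "n \<ge> 1" "t0 = - 2 * of_real pi * of_nat n ^ 2" by blast
    define m0 where "m0 = n - 1"
    have sm0: "Suc m0 = n" using n by (simp add: m0_def)
    have condiff: "cond m \<longleftrightarrow> m = m0" for m
    proof
      assume "cond m"
      then have "(- 2 * of_real pi * of_nat (Suc m) ^ 2 :: complex) = - 2 * of_real pi * of_nat n ^ 2"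
        using n by (simp add: cond_def)
      then have "Suc m = n" by (rule nat_sq_eq_complex)
      then show "m = m0" using sm0 by simp
    qed (use n sm0 in \<open>simp add: cond_def\<close>)
    have "norm t0 = 2 * pi * real n ^ 2" using n by (simp add: norm_mult norm_power)
    moreover have "real n \<le> 2 * pi * real n ^ 2"
    proof -
      have "real n \<le> real n ^ 2" using n by (simp add: power2_eq_square)
      moreover have "real n ^ 2 \<le> 2 * pi * real n ^ 2" using pi_gt3 by (simp add: mult_le_cancel_right1)
      ultimately show ?thesis by linarith
    qed
    ultimately have "real n < real N" unfolding N_def M_def by linarith
    then have m0N: "m0 < N" using sm0 by linarith
    have "Bh t0 = (\<Sum>m<N. if m = m0 then X m t0 * t0 else 0)"
      unfolding Bh_def using condiff by simp
    also have "\<dots> = X m0 t0 * t0" using m0N by simp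
    finally have "Bh t0 = X m0 t0 * t0" .
    moreover have "t0 \<noteq> 0" using n pi_gt_zero by simp
    moreover have "X m0 t0 \<noteq> 0" unfolding X_def by (rule powr_nat_nz)
    ultimately show "Bh t0 \<noteq> 0" by simp
  qed
  ultimately show ?thesis by blast
qed

lemma EF_analytic: "f analytic_on S \<Longrightarrow> (\<lambda>t. EF (f t)) analytic_on S"
proof -
  assume f: "f analytic_on S"
  have "EF analytic_on UNIV" using holo_EF by (simp add: analytic_on_open)
  then have "(EF \<circ> f) analytic_on S" by (intro analytic_on_compose[OF f]) (auto elim: analytic_on_subset)
  then show ?thesis by (simp add: o_def)
qed

definition zz :: "nat \<Rightarrow> complex \<Rightarrow> complex" where
  "zz j t = Zf (1/2 + \<i> * t + 2 * of_nat j)"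

definition ZA :: "nat \<Rightarrow> complex \<Rightarrow> complex \<Rightarrow> complex" where
  "ZA j t0 = (if 1/2 + \<i> * t0 + 2 * of_nat j = 1 then (\<lambda>_. 1) else zz j)"

definition ZB :: "nat \<Rightarrow> complex \<Rightarrow> complex \<Rightarrow> complex" where
  "ZB j t0 = (if 1/2 + \<i> * t0 + 2 * of_nat j = 1 then (\<lambda>t. EF (1/2 + \<i> * t + 2 * of_nat j) / \<i>) else (\<lambda>_. 0))"

lemma w_eq_1_iff: "(1/2 + \<i> * t0 + 2 * of_nat j = 1) \<longleftrightarrow> t0 = 2 * of_nat j * \<i> - \<i> / 2"
  by (auto simp: complex_eq_iff)

lemma Z_rep: "rep (zz j) t0 (ZA j t0) (ZB j t0)"
proof (cases "1/2 + \<i> * t0 + 2 * of_nat j = 1")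
  case True
  have "rep (zz j) t0 (\<lambda>_. 1) (\<lambda>t. EF (1/2 + \<i> * t + 2 * of_nat j) / \<i>)"
    unfolding rep_def
  proof (intro conjI)
    show "(\<lambda>_. 1) analytic_on {t0}" by simp
    show "(\<lambda>t. EF (1/2 + \<i> * t + 2 * of_nat j) / \<i>) analytic_on {t0}"
      by (intro analytic_intros EF_analytic) auto
    have "zz j t = 1 + EF (1/2 + \<i> * t + 2 * of_nat j) / \<i> / (t - t0)" if "t \<noteq> t0" for t
    proof -
      have "1/2 + \<i> * t + 2 * of_nat j - 1 = \<i> * (t - t0)"
        using True by (auto simp: complex_eq_iff)
      then show ?thesis by (simp only: zz_def Zf_def divide_divide_eq_left)
    qed
    then show "eventually (\<lambda>t. zz j t = 1 + EF (1/2 + \<i> * t + 2 * of_nat j) / \<i> / (t - t0)) (at t0)"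
      using eventually_neq_at_within[of t0 t0 UNIV] by (auto elim: eventually_mono)
  qed
  then show ?thesis using True by (simp add: ZA_def ZB_def)
next
  case False
  have "(\<lambda>t. 1 + EF (1/2 + \<i> * t + 2 * of_nat j) / ((1/2 + \<i> * t + 2 * of_nat j) - 1)) analytic_on {t0}"
    by (intro analytic_intros EF_analytic) (use False in \<open>auto simp: complex_eq_iff\<close>)
  then have "zz j analytic_on {t0}" by (simp add: zz_def[abs_def] Zf_def)
  then show ?thesis using False by (simp add: ZA_def ZB_def rep_analytic)
qed

lemma ZB_at: "ZB j t0 t0 = (if t0 = 2 * of_nat j * \<i> - \<i> / 2 then 1 / \<i> else 0)"
proof (cases "1/2 + \<i> * t0 + 2 * of_nat j = 1")
  case True
  have "ZB j t0 t0 = EF (1/2 + \<i> * t0 + 2 * of_nat j) / \<i>" by (simp only: ZB_def if_P[OF True])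
  also have "\<dots> = 1 / \<i>" by (simp only: True EF_1)
  finally show ?thesis using True w_eq_1_iff by simp
qed (use w_eq_1_iff in \<open>simp add: ZB_def\<close>)

definition inP :: "complex \<Rightarrow> bool" where
  "inP t \<longleftrightarrow> (\<exists>n::nat. n \<ge> 1 \<and> t = - 2 * of_real pi * of_nat n ^ 2)"

lemma RR_step:
  assumes t: "Im t < 2 * real J + 3/2" "\<not> inP t"
  shows "RR J t = t / (2 * of_real pi) * (zz (Suc J) t - RR (Suc J) t)"
proof -
  define w where "w = 1/2 + \<i> * t + 2 * of_nat (Suc J)"
  have w: "Re w > 1" using t by (simp add: w_def)
  have s1: "(\<lambda>m. of_nat (Suc m) powr (-w)) sums zz (Suc J) t"
    using Zf_sums[OF w] by (simp add: zz_def w_def)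
  have s2: "rterm (Suc J) t sums RR (Suc J) t"
    unfolding RR_def by (rule summable_sums, rule summable_rterm) (use t in simp)
  have eq: "rterm J t m = t / (2 * of_real pi) * (of_nat (Suc m) powr (-w) - rterm (Suc J) t m)" for m
  proof -
    define n where "n = (of_nat (Suc m) :: complex)"
    define D where "D = 2 * of_real pi * n^2 + t"
    define X where "X = n powr (-w)"
    have D: "D \<noteq> 0"
    proof
      assume "D = 0"
      then have "t = - (2 * of_real pi * n^2)" by (simp only: D_def add_eq_0_iff)
      then have "t = - 2 * of_real pi * of_nat (Suc m) ^ 2" by (simp add: n_def)
      then show False using t(2) unfolding inP_def by (metis le_add1 plus_1_eq_Suc)
    qed
    have n: "n \<noteq> 0" unfolding n_def by (rule of_nat_neq_0)
    have ex0: "(- (1/2) - \<i> * t - 2 * of_nat J :: complex) = -w + 2"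
      by (auto simp: w_def complex_eq_iff)
    have "n powr (- (1/2) - \<i> * t - 2 * of_nat J) = n powr (-w + 2)"
      by (simp only: ex0)
    also have "\<dots> = X * n^2" by (simp only: powr_add X_def powr_complexnumeral)
    finally have e1: "n powr (- (1/2) - \<i> * t - 2 * of_nat J) = X * n^2" .
    have ex: "(- (1/2) - \<i> * t - 2 * of_nat (Suc J) :: complex) = - w"
      by (auto simp: w_def complex_eq_iff)
    have e2: "n powr (- (1/2) - \<i> * t - 2 * of_nat (Suc J)) = X"
      by (simp only: ex X_def)
    have "rterm J t m = X * n^2 * (t / D)"
      unfolding rterm_def n_def[symmetric] e1 D_def[symmetric] by (rule refl)
    moreover have "rterm (Suc J) t m = X * (t / D)"
      unfolding rterm_def n_def[symmetric] e2 D_def[symmetric] by (rule refl)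
    moreover have "X * n^2 * (t / D) = t / (2 * of_real pi) * (X - X * (t / D))"
      using D by (simp add: D_def field_simps)
    ultimately show ?thesis by (simp add: X_def n_def)
  qed
  have "(\<lambda>m. t / (2 * of_real pi) * (of_nat (Suc m) powr (-w) - rterm (Suc J) t m)) sums
          (t / (2 * of_real pi) * (zz (Suc J) t - RR (Suc J) t))"
    by (intro sums_mult sums_diff s1 s2)
  moreover have "rterm J t = (\<lambda>m. t / (2 * of_real pi) * (of_nat (Suc m) powr (-w) - rterm (Suc J) t m))"
    using eq by (intro ext)
  ultimately have "rterm J t sums (t / (2 * of_real pi) * (zz (Suc J) t - RR (Suc J) t))"
    by simp
  then show ?thesis by (simp add: RR_def sums_iff)
qed

definition FF :: "nat \<Rightarrow> complex \<Rightarrow> complex" where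
  "FF J t = (\<Sum>j\<in>{1..J}. (-1)^(j-1) * (t / (2 * of_real pi))^j * zz j t)
      + (-1)^J * (t / (2 * of_real pi))^J * RR J t"

lemma FF_step:
  assumes "Im t < 2 * real J + 3/2" "\<not> inP t"
  shows "FF (Suc J) t = FF J t"
proof -
  define q where "q = t / (2 * of_real pi)"
  have e: "RR J t = q * (zz (Suc J) t - RR (Suc J) t)" using RR_step[OF assms] by (simp add: q_def)
  show ?thesis
    unfolding FF_def q_def[symmetric] e by (simp add: sum.cl_ivl_Suc algebra_simps)
qed

lemma FF_mono:
  assumes "Im t < 2 * real J + 3/2" "\<not> inP t" "J \<le> J'"
  shows "FF J' t = FF J t"
  using assms(3)
proof (induction J' rule: dec_induct)
  case base then show ?case by simp
next
  case (step n)
  have "FF (Suc n) t = FF n t" by (rule FF_step) (use assms step in auto)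
  then show ?case using step by simp
qed

definition FG :: "complex \<Rightarrow> complex" where
  "FG t = FF (nat \<lceil>Im t\<rceil>) t"

lemma FG_eq:
  assumes "Im t < 2 * real J + 3/2" "\<not> inP t"
  shows "FG t = FF J t"
proof -
  define J0 where "J0 = nat \<lceil>Im t\<rceil>"
  have "Im t \<le> real J0" unfolding J0_def by (rule real_nat_ceiling_ge)
  then have J0: "Im t < 2 * real J0 + 3/2" using of_nat_0_le_iff[of J0] by linarith
  have "FG t = FF J0 t" by (simp add: FG_def J0_def)
  also have "\<dots> = FF (max J J0) t" by (rule FF_mono[symmetric]) (use J0 assms in auto)
  also have "\<dots> = FF J t" by (rule FF_mono) (use assms in auto)
  finally show ?thesis .
qed

lemma P_sparse: "eventually (\<lambda>t. \<not> inP t) (at t0)"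
proof -
  define N where "N = nat \<lceil>norm t0\<rceil> + 1"
  have e1: "eventually (\<lambda>t. \<forall>n\<in>{..<N}. t \<noteq> - 2 * of_real pi * of_nat n ^ 2) (at t0)"
    by (intro eventually_ball_finite ballI eventually_neq_at_within) auto
  have e2: "eventually (\<lambda>t. t \<in> ball t0 1) (at t0)"
    by (rule eventually_at_in_open') auto
  show ?thesis using e1 e2
  proof eventually_elim
    case (elim t)
    show "\<not> inP t"
    proof
      assume "inP t"
      then obtain n :: nat where n: "n \<ge> 1" "t = - 2 * of_real pi * of_nat n ^ 2" by (auto simp: inP_def)
      show False
      proof (cases "n < N")
        case True then show False using elim n by auto
      next
        case False
        have "norm t = 2 * pi * real n ^ 2" using n by (simp add: norm_mult norm_power)
        moreover have "real n \<le> 2 * pi * real n ^ 2"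
        proof -
          have "real n \<le> real n ^ 2" using n by (simp add: power2_eq_square)
          moreover have "real n ^ 2 \<le> 2 * pi * real n ^ 2" using pi_gt3 by (simp add: mult_le_cancel_right1)
          ultimately show ?thesis by linarith
        qed
        moreover have "real N \<le> real n" using False by simp
        moreover have "norm t0 + 1 \<le> real N" unfolding N_def by linarith
        moreover have "norm t \<le> norm t0 + norm (t - t0)" using norm_triangle_ineq[of t0 "t - t0"] by simp
        moreover have "norm (t - t0) < 1" using elim by (simp add: dist_norm norm_minus_commute)
        ultimately show False by linarith
      qed
    qed
  qed
qed




definition isP :: "complex \<Rightarrow> bool" where
  "isP z \<longleftrightarrow> ((\<exists>k::nat. k \<ge> 1 \<and> z = 2 * of_nat k * \<i> - \<i> / 2) \<or> inP z)"

lemma F_rep: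
  obtains A B where "rep FG t0 A B" "B t0 \<noteq> 0 \<longleftrightarrow> isP t0"
proof -
  define J where "J = nat \<lceil>Im t0\<rceil> + 1"
  have "Im t0 \<le> real (nat \<lceil>Im t0\<rceil>)" by (rule real_nat_ceiling_ge)
  then have hJ: "Im t0 < 2 * real J + 3/2" unfolding J_def by simp
  obtain AR BR where R: "rep (RR J) t0 AR BR" and BR: "BR t0 \<noteq> 0 \<longleftrightarrow> inP t0"
    using R_rep[OF hJ] unfolding inP_def by blast
  define c where "c j t = (-1)^(j-1) * (t / (2 * of_real pi))^j" for j and t :: complex
  define d where "d t = (-1)^J * (t / (2 * of_real pi))^J" for t :: complex
  define B where "B (t::complex) = (\<Sum>j\<in>{1..J}. c j t * ZB j t0 t) + d t * BR t" for t
  have r1: "rep (\<lambda>t. c j t * zz j t) t0 (\<lambda>t. c j t * ZA j t0 t) (\<lambda>t. c j t * ZB j t0 t)" for j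
    by (rule rep_mult[OF _ Z_rep]) (auto simp: c_def intro!: analytic_intros)
  have r2: "rep (\<lambda>t. \<Sum>j\<in>{1..J}. c j t * zz j t) t0 (\<lambda>t. \<Sum>j\<in>{1..J}. c j t * ZA j t0 t) (\<lambda>t. \<Sum>j\<in>{1..J}. c j t * ZB j t0 t)"
    using rep_sum[where I="{1..J}" and f="\<lambda>j t. c j t * zz j t" and A="\<lambda>j t. c j t * ZA j t0 t" and B="\<lambda>j t. c j t * ZB j t0 t" and z=t0] r1
    by blast
  have r3: "rep (\<lambda>t. d t * RR J t) t0 (\<lambda>t. d t * AR t) (\<lambda>t. d t * BR t)"
    by (rule rep_mult[OF _ R]) (auto simp: d_def intro!: analytic_intros)
  have r4: "rep (\<lambda>t. (\<Sum>j\<in>{1..J}. c j t * zz j t) + d t * RR J t) t0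
          (\<lambda>t. (\<Sum>j\<in>{1..J}. c j t * ZA j t0 t) + d t * AR t) B"
    unfolding B_def by (rule rep_add[OF r2 r3])
  have FFe: "FF J t = (\<Sum>j\<in>{1..J}. c j t * zz j t) + d t * RR J t" for t
    unfolding FF_def c_def d_def by (rule refl)
  have repFF: "rep (FF J) t0 (\<lambda>t. (\<Sum>j\<in>{1..J}. c j t * ZA j t0 t) + d t * AR t) B"
    by (rule rep_cong[OF r4]) (simp add: FFe)
  have ev: "eventually (\<lambda>t. FG t = FF J t) (at t0)"
  proof -
    have "eventually (\<lambda>t. t \<in> {t. Im t < 2 * real J + 3/2}) (at t0)"
      by (rule eventually_at_in_open') (use hJ in \<open>auto intro: open_halfspace_Im_lt\<close>)
    then show ?thesis using P_sparse[of t0] by eventually_elim (simp add: FG_eq)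
  qed
  have repF: "rep FG t0 (\<lambda>t. (\<Sum>j\<in>{1..J}. c j t * ZA j t0 t) + d t * AR t) B"
    by (rule rep_cong[OF repFF ev])
  have Bt0: "B t0 = (\<Sum>j\<in>{1..J}. c j t0 * (if t0 = 2 * of_nat j * \<i> - \<i> / 2 then 1 / \<i> else 0)) + d t0 * BR t0"
    by (simp add: B_def ZB_at)
  have cnz: "c j t0 \<noteq> 0" "d t0 \<noteq> 0" if "t0 \<noteq> 0" for j using that by (auto simp: c_def d_def)
  have "B t0 \<noteq> 0 \<longleftrightarrow> ((\<exists>k::nat. k \<ge> 1 \<and> t0 = 2 * of_nat k * \<i> - \<i> / 2) \<or> inP t0)"
  proof (cases "\<exists>k::nat. k \<ge> 1 \<and> t0 = 2 * of_nat k * \<i> - \<i> / 2")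
    case True
    then obtain k :: nat where k: "k \<ge> 1" "t0 = 2 * of_nat k * \<i> - \<i> / 2" by blast
    have Im0: "Im t0 = 2 * real k - 1/2" using k by simp
    have nP: "\<not> inP t0"
    proof
      assume "inP t0"
      then obtain n :: nat where "t0 = - 2 * of_real pi * of_nat n ^ 2" by (auto simp: inP_def)
      then have "Im t0 = 0" by simp
      then show False using Im0 k by simp
    qed
    have condj: "t0 = 2 * of_nat j * \<i> - \<i> / 2 \<longleftrightarrow> j = k" for j :: nat
    proof
      assume "t0 = 2 * of_nat j * \<i> - \<i> / 2"
      then have "Im t0 = 2 * real j - 1/2" by simp
      then show "j = k" using Im0 by simp
    qed (use k in simp)
    have kJ: "k \<in> {1..J}"
    proof -
      have "real k \<le> 2 * real k - 1/2" using k by simp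
      also have "\<dots> \<le> real (nat \<lceil>Im t0\<rceil>)" using Im0 real_nat_ceiling_ge[of "Im t0"] by simp
      finally have "k \<le> nat \<lceil>Im t0\<rceil>" by simp
      then show ?thesis using k by (simp add: J_def)
    qed
    have t0nz: "t0 \<noteq> 0"
    proof
      assume "t0 = 0"
      then have "Im t0 = 0" by simp
      moreover have "real k \<ge> 1" using k by simp
      ultimately show False using Im0 by linarith
    qed
    have sumeq: "(\<Sum>j\<in>{1..J}. c j t0 * (if t0 = 2 * of_nat j * \<i> - \<i> / 2 then 1 / \<i> else 0))
        = (\<Sum>j\<in>{1..J}. if j = k then c k t0 * (1 / \<i>) else 0)"
      by (intro sum.cong refl) (auto simp: condj)
    have "B t0 = c k t0 * (1 / \<i>)"
      unfolding Bt0 sumeq using nP BR kJ by simp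
    then have "B t0 \<noteq> 0" using cnz[OF t0nz] by simp
    then show ?thesis using True by simp
  next
    case False
    have "(if t0 = 2 * of_nat j * \<i> - \<i> / 2 then 1 / \<i> else 0) = 0" if "j \<in> {1..J}" for j
      using False that by auto
    then have Bt: "B t0 = d t0 * BR t0" unfolding Bt0 by simp
    show ?thesis
    proof (cases "inP t0")
      case True
      then have "t0 \<noteq> 0" using pi_gt_zero by (auto simp: inP_def)
      then show ?thesis using True BR Bt cnz by simp
    next
      case False
      then show ?thesis using BR Bt \<open>\<not> (\<exists>k. _)\<close> by simp
    qed
  qed
  then show ?thesis using repF that unfolding isP_def by blast
qed

lemma RR0_G: "RR 0 t = G t"
  unfolding RR_def G_def rterm_def Let_def by simp

lemma Pall_iff:
  "z \<in> {2 * of_nat k * \<i> - \<i> / 2 | k::nat. k \<ge> 1} \<union> {- 2 * of_real pi * of_nat n ^ 2 | n::nat. n \<ge> 1}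
   \<longleftrightarrow> isP z"
  unfolding isP_def by (auto simp: inP_def)

theorem mainTheorem10:
  shows "\<exists>F. F meromorphic_on UNIV \<and>
     (\<forall>t. Im t < 3/2 \<and> (\<forall>n::nat. n \<ge> 1 \<longrightarrow> t \<noteq> - 2 * of_real pi * of_nat n ^ 2) \<longrightarrow> F t = G t) \<and>
     {z. is_pole F z} =
       {2 * of_nat k * \<i> - \<i> / 2 | k::nat. k \<ge> 1} \<union> {- 2 * of_real pi * of_nat n ^ 2 | n::nat. n \<ge> 1} \<and>
     (\<forall>z. is_pole F z \<longrightarrow> zorder F z = -1)"
proof (intro exI[of _ FG] conjI allI impI)
  show "FG meromorphic_on UNIV"
  proof (rule meromorphic_on_meromorphic_at[THEN iffD2], rule ballI)
    fix x :: complex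
    obtain A B where r: "rep FG x A B" by (rule F_rep)
    show "FG meromorphic_on {x}" by (rule rep_mero[OF r])
  qed
next
  fix t :: complex
  assume t: "Im t < 3/2 \<and> (\<forall>n::nat. n \<ge> 1 \<longrightarrow> t \<noteq> - 2 * of_real pi * of_nat n ^ 2)"
  then have "\<not> inP t" by (auto simp: inP_def)
  then have "FG t = FF 0 t" using t by (intro FG_eq) auto
  also have "\<dots> = G t" by (simp add: FF_def RR0_G)
  finally show "FG t = G t" .
next
  have pc: "is_pole FG z \<longleftrightarrow> isP z" for z
  proof -
    obtain A B where r: "rep FG z A B" and b: "B z \<noteq> 0 \<longleftrightarrow> isP z" by (rule F_rep)
    show ?thesis
      using rep_pole[OF r] rep_nopole[OF r] b by blast
  qed
  show "{z. is_pole FG z} =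
       {2 * of_nat k * \<i> - \<i> / 2 | k::nat. k \<ge> 1} \<union> {- 2 * of_real pi * of_nat n ^ 2 | n::nat. n \<ge> 1}"
    by (rule set_eqI) (simp only: mem_Collect_eq Pall_iff pc)
next
  fix z assume pole: "is_pole FG z"
  obtain A B where r: "rep FG z A B" and b: "B z \<noteq> 0 \<longleftrightarrow> isP z" by (rule F_rep)
  have "B z \<noteq> 0" using rep_nopole[OF r] pole by blast
  then show "zorder FG z = -1" using rep_pole[OF r] by blast
qed


end
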